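(* Let $N\ge1$, $p\ge2$, $w,g\in L^1_{loc}(\mathbb{R}^N)$ positive a.e. with $g^{-1}\in L^\infty(\mathbb{R}^N)$. Let $\delta=\gamma\ge1$ with $(\delta,p)$ in the class $P_a$. Let $u\in C^1(\mathbb{R}^N)$, $u>0$, be a stable weak solution of $\operatorname{div}(w|\nabla u|^{p-2}\nabla u)=g(x)(u^{-\delta}+u^{-\gamma})$ (i.e. $=2g(x)u^{-\delta}$) in $\mathbb{R}^N$. Then for every $\beta\in(0,s_p)$ there exists a constant $c>0$, depending on $\beta,p,\delta,m$ but not on $\psi$, such that for every $\psi\in C^1_c(\mathbb{R}^N)$ with $0\le\psi\le1$, $$\int_{\mathbb{R}^N} g\Big(\frac{\psi}{u}\Big)^{2\beta+p-1+\delta}dx\le c\int_{\mathbb{R}^N} w^{\theta_a'}|\nabla\psi|^{p\theta_a'}dx,\qquad \theta_a'=\frac{2\beta+p-1+\delta}{p-1+\delta}.$$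
   Context: Here $m=\|g^{-1}\|_{L^\infty}$. Weak solution and stability are with respect to $f(t)=-t^{-\delta}-t^{-\gamma}$ and the equation $-\operatorname{div}(w|\nabla u|^{p-2}\nabla u)=gf(u)$: $u\in C^1$ is a weak solution if $\int w|\nabla u|^{p-2}\nabla u\cdot\nabla\varphi=\int gf(u)\varphi$ for all $\varphi\in C^1_c(\mathbb{R}^N)$; it is stable if for all $\varphi\in C^1_c(\mathbb{R}^N)$, $\int w|\nabla u|^{p-2}|\nabla\varphi|^2+(p-2)\int w|\nabla u|^{p-4}(\nabla u\cdot\nabla\varphi)^2-\int gf'(u)\varphi^2\ge0$ (middle integrand $=0$ where $\nabla u=0$). Class $P_a$: $(\delta,p)\in P_a$ if either $2\le p<3$ and $\delta\ge1$, or $p=3$ and $\delta>1$, or $p>3$ and $\delta>\frac{(p-1)^2}{4}$. $s_p=\delta+\sqrt{\delta^2+\delta}$ if $p=2$, $s_p=\frac{2\delta}{p-1}-\frac{p-1}{2}$ if $p>2$. *)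

theory Defs
  imports "HOL-Analysis.Analysis"
begin

definition grad :: "('a::euclidean_space \<Rightarrow> real) \<Rightarrow> 'a \<Rightarrow> 'a" where
  "grad u x = (\<Sum>b\<in>Basis. frechet_derivative u (at x) b *\<^sub>R b)"

definition C1 :: "('a::euclidean_space \<Rightarrow> real) \<Rightarrow> bool" where
  "C1 u \<longleftrightarrow> (\<forall>x. u differentiable (at x)) \<and> continuous_on UNIV (grad u)"

definition C1c :: "('a::euclidean_space \<Rightarrow> real) \<Rightarrow> bool" where
  "C1c u \<longleftrightarrow> C1 u \<and> compact (closure {x. u x \<noteq> 0})"

definition L1loc :: "('a::euclidean_space \<Rightarrow> real) \<Rightarrow> bool" where
  "L1loc f \<longleftrightarrow> (\<forall>K. compact K \<longrightarrow> set_integrable lebesgue K f)"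

definition Linf :: "('a::euclidean_space \<Rightarrow> real) \<Rightarrow> bool" where
  "Linf f \<longleftrightarrow> f \<in> borel_measurable lebesgue \<and> (\<exists>M. AE x in lebesgue. \<bar>f x\<bar> \<le> M)"

definition Linf_norm :: "('a::euclidean_space \<Rightarrow> real) \<Rightarrow> real" where
  "Linf_norm f = Inf {M. 0 \<le> M \<and> (AE x in lebesgue. \<bar>f x\<bar> \<le> M)}"

text \<open>Power t^a for t \<ge> 0 with the convention t^0 = 1 (Isabelle's powr has 0 powr 0 = 0).\<close>
definition npow :: "real \<Rightarrow> real \<Rightarrow> real" where
  "npow t a = (if a = 0 then 1 else t powr a)"

definition fnl :: "real \<Rightarrow> real \<Rightarrow> real \<Rightarrow> real" where
  "fnl \<delta> \<gamma> t = - (t powr (-\<delta>)) - t powr (-\<gamma>)"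

definition fnl' :: "real \<Rightarrow> real \<Rightarrow> real \<Rightarrow> real" where
  "fnl' \<delta> \<gamma> t = \<delta> * t powr (-\<delta> - 1) + \<gamma> * t powr (-\<gamma> - 1)"

text \<open>Weak solution of -div(w |grad u|^{p-2} grad u) = g f(u).\<close>
definition weak_solution ::
  "real \<Rightarrow> real \<Rightarrow> real \<Rightarrow> ('a::euclidean_space \<Rightarrow> real) \<Rightarrow> ('a \<Rightarrow> real) \<Rightarrow> ('a \<Rightarrow> real) \<Rightarrow> bool" where
  "weak_solution p \<delta> \<gamma> w g u \<longleftrightarrow> C1 u \<and>
     (\<forall>\<phi>. C1c \<phi> \<longrightarrow>
        (\<integral>x. w x * npow (norm (grad u x)) (p - 2) * (grad u x \<bullet> grad \<phi> x) \<partial>lebesgue)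
        = (\<integral>x. g x * fnl \<delta> \<gamma> (u x) * \<phi> x \<partial>lebesgue))"

definition stable ::
  "real \<Rightarrow> real \<Rightarrow> real \<Rightarrow> ('a::euclidean_space \<Rightarrow> real) \<Rightarrow> ('a \<Rightarrow> real) \<Rightarrow> ('a \<Rightarrow> real) \<Rightarrow> bool" where
  "stable p \<delta> \<gamma> w g u \<longleftrightarrow>
     (\<forall>\<phi>. C1c \<phi> \<longrightarrow>
        (\<integral>x. w x * npow (norm (grad u x)) (p - 2) * (norm (grad \<phi> x))\<^sup>2 \<partial>lebesgue)
        + (p - 2) * (\<integral>x. (if grad u x = 0 then 0
               else w x * norm (grad u x) powr (p - 4) * (grad u x \<bullet> grad \<phi> x)\<^sup>2) \<partial>lebesgue)
        - (\<integral>x. g x * fnl' \<delta> \<gamma> (u x) * (\<phi> x)\<^sup>2 \<partial>lebesgue) \<ge> 0)"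

definition class_Pa :: "real \<Rightarrow> real \<Rightarrow> bool" where
  "class_Pa \<delta> p \<longleftrightarrow> (2 \<le> p \<and> p < 3 \<and> \<delta> \<ge> 1) \<or> (p = 3 \<and> \<delta> > 1)
      \<or> (p > 3 \<and> \<delta> > (p - 1)\<^sup>2 / 4)"

definition s_p :: "real \<Rightarrow> real \<Rightarrow> real" where
  "s_p p \<delta> = (if p = 2 then \<delta> + sqrt (\<delta>\<^sup>2 + \<delta>) else 2 * \<delta> / (p - 1) - (p - 1) / 2)"

end

theory Submission
  imports Defs
begin



lemma linear_eq_inner_grad:
  fixes L :: "'a::euclidean_space \<Rightarrow> real"
  assumes "linear L"
  shows "L h = (\<Sum>b\<in>Basis. L b *\<^sub>R b) \<bullet> h"
proof -
  have "L h = L (\<Sum>b\<in>Basis. (h \<bullet> b) *\<^sub>R b)" by (simp add: euclidean_representation)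
  also have "\<dots> = (\<Sum>b\<in>Basis. (h \<bullet> b) * L b)"
    using assms by (simp add: linear_sum linear_scale)
  also have "\<dots> = (\<Sum>b\<in>Basis. L b *\<^sub>R b) \<bullet> h"
    by (auto simp: inner_sum_right intro!: sum.cong simp: inner_commute)
  finally show ?thesis .
qed

lemma has_derivative_grad:
  fixes f :: "'a::euclidean_space \<Rightarrow> real"
  assumes "f differentiable (at x)"
  shows "(f has_derivative (\<lambda>h. grad f x \<bullet> h)) (at x)"
proof -
  have d: "(f has_derivative frechet_derivative f (at x)) (at x)"
    using assms frechet_derivative_works by blast
  then have "linear (frechet_derivative f (at x))"
    using has_derivative_linear by blast
  then have "frechet_derivative f (at x) = (\<lambda>h. grad f x \<bullet> h)"
    by (intro ext) (unfold grad_def, erule linear_eq_inner_grad)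
  with d show ?thesis by simp
qed

lemma grad_eq:
  fixes f :: "'a::euclidean_space \<Rightarrow> real"
  assumes "(f has_derivative (\<lambda>h. G \<bullet> h)) (at x)"
  shows "grad f x = G"
proof -
  have "frechet_derivative f (at x) = (\<lambda>h. G \<bullet> h)"
    using frechet_derivative_at[OF assms] by simp
  moreover have "(\<Sum>b\<in>Basis. (b \<bullet> G) *\<^sub>R b) = (\<Sum>b\<in>Basis. (G \<bullet> b) *\<^sub>R b)"
    by (simp add: inner_commute)
  ultimately show ?thesis unfolding grad_def
    by (simp add: euclidean_representation)
qed

lemma cont_borel_lebesgue:
  fixes f :: "'a::euclidean_space \<Rightarrow> 'b::euclidean_space"
  assumes "continuous_on UNIV f"
  shows "f \<in> borel_measurable lebesgue"
  by (metis measurable_completion borel_measurable_continuous_onI assms measurable_lborel2)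

lemma DERIV_powr_gt1:
  fixes k t :: real
  assumes "k > 1"
  shows "((\<lambda>t. t powr k) has_real_derivative (k * t powr (k - 1) * sgn t)) (at t)"
proof (cases "t = 0")
  case True
  have "((\<lambda>y. (y powr k - 0 powr k) / (y - 0)) \<longlongrightarrow> 0) (at 0)"
  proof (rule tendsto_norm_zero_cancel)
    have "((\<lambda>y. \<bar>y\<bar> powr (k - 1)) \<longlongrightarrow> 0 powr (k-1)) (at (0::real))"
    proof (rule tendsto_powr')
      show "((\<lambda>y. \<bar>y\<bar>) \<longlongrightarrow> 0) (at (0::real))"
        using tendsto_rabs[OF tendsto_ident_at[of "0::real" UNIV]] by simp
    qed (use assms in auto)
    then have lim: "((\<lambda>y. \<bar>y\<bar> powr (k - 1)) \<longlongrightarrow> 0) (at (0::real))" by simp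
    have key: "y powr k / \<bar>y\<bar> = \<bar>y\<bar> powr (k - 1)" if "y \<noteq> 0" for y :: real
    proof -
      have "y powr k = \<bar>y\<bar> powr k" by (simp add: abs_if uminus_powr_eq)
      also have "\<dots> = \<bar>y\<bar> powr (k - 1) * \<bar>y\<bar>"
        by (metis abs_abs diff_add_cancel powr_add powr_one')
      finally show ?thesis using \<open>y \<noteq> 0\<close> by simp
    qed
    have ev: "\<forall>\<^sub>F y in at (0::real). norm ((y powr k - 0 powr k) / (y - 0)) = \<bar>y\<bar> powr (k - 1)"
      unfolding eventually_at_filter by (rule always_eventually) (auto simp: key)
    show "((\<lambda>y. norm ((y powr k - 0 powr k) / (y - 0))) \<longlongrightarrow> 0) (at 0)"
      by (rule iffD2[OF tendsto_cong[OF ev] lim])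
  qed
  then show ?thesis using True by (simp add: has_field_derivative_iff)
next
  case False
  show ?thesis
  proof (cases "t > 0")
    case True
    then show ?thesis using has_real_derivative_powr[OF True, of k] by simp
  next
    case False
    then have t: "-t > 0" using \<open>t \<noteq> 0\<close> by simp
    have d1: "((\<lambda>z. z powr k) has_real_derivative k * (-t) powr (k - 1)) (at (-t))"
      using has_real_derivative_powr[OF t] .
    have d2: "((\<lambda>t. -t) has_real_derivative -1) (at t)"
      by (auto intro!: derivative_eq_intros)
    have "((\<lambda>t. (-t) powr k) has_real_derivative (k * (-t) powr (k - 1) * (-1))) (at t)"
      using DERIV_chain2[OF d1 d2] by simp
    then show ?thesis using False \<open>t \<noteq> 0\<close> by (simp add: uminus_powr_eq)
  qed
qed

lemma has_derivative_comp_real: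
  fixes f :: "'a::euclidean_space \<Rightarrow> real"
  assumes "(f has_derivative (\<lambda>h. G \<bullet> h)) (at x)"
    and "(F has_real_derivative F') (at (f x))"
  shows "((\<lambda>x. F (f x)) has_derivative (\<lambda>h. (F' *\<^sub>R G) \<bullet> h)) (at x)"
  using DERIV_compose_FDERIV[OF assms(2) assms(1)] by (simp add: mult.commute)


lemma C1_diff: "C1 u \<Longrightarrow> (u has_derivative (\<lambda>h. grad u x \<bullet> h)) (at x)"
  unfolding C1_def by (simp add: has_derivative_grad)

lemma C1_cont: "C1 u \<Longrightarrow> continuous_on UNIV u"
  unfolding C1_def
  by (meson differentiable_at_imp_differentiable_on differentiable_imp_continuous_on)

lemma C1_grad_cont: "C1 u \<Longrightarrow> continuous_on UNIV (grad u)"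
  unfolding C1_def by simp

lemma test_fun:
  fixes u \<psi> :: "'a::euclidean_space \<Rightarrow> real"
  assumes u: "C1 u" "\<forall>x. u x > 0" and \<psi>: "C1c \<psi>" "\<forall>x. \<psi> x \<ge> 0" and k: "k > 1"
  shows "C1c (\<lambda>x. u x powr (-a) * \<psi> x powr k)"
    and "grad (\<lambda>x. u x powr (-a) * \<psi> x powr k) x =
      (-a * u x powr (-a-1) * \<psi> x powr k) *\<^sub>R grad u x
      + (u x powr (-a) * (k * \<psi> x powr (k-1))) *\<^sub>R grad \<psi> x"
proof -
  have \<psi>C1: "C1 \<psi>" using \<psi> unfolding C1c_def by simp
  define GG where "GG = (\<lambda>x. (-a * u x powr (-a-1) * \<psi> x powr k) *\<^sub>R grad u x
      + (u x powr (-a) * (k * \<psi> x powr (k-1))) *\<^sub>R grad \<psi> x)"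
  have D: "((\<lambda>x. u x powr (-a) * \<psi> x powr k) has_derivative (\<lambda>h. GG x \<bullet> h)) (at x)" for x
  proof -
    have d1: "((\<lambda>x. u x powr (-a)) has_derivative (\<lambda>h. ((-a * u x powr (-a-1)) *\<^sub>R grad u x) \<bullet> h)) (at x)"
      by (rule has_derivative_comp_real[OF C1_diff[OF u(1)]])
        (use has_real_derivative_powr[of "u x" "-a"] u(2) in simp)
    have e: "k * \<psi> x powr (k - 1) * sgn (\<psi> x) = k * \<psi> x powr (k - 1)"
      using \<psi>(2) k by (cases "\<psi> x = 0") (auto simp: sgn_if order_le_less)
    have d2: "((\<lambda>x. \<psi> x powr k) has_derivative (\<lambda>h. ((k * \<psi> x powr (k - 1)) *\<^sub>R grad \<psi> x) \<bullet> h)) (at x)"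
      by (rule has_derivative_comp_real[OF C1_diff[OF \<psi>C1]])
        (use DERIV_powr_gt1[OF k, of "\<psi> x"] e in simp)
    show ?thesis
      by (rule has_derivative_eq_rhs[OF has_derivative_mult[OF d1 d2]])
        (auto simp: GG_def inner_add_left algebra_simps)
  qed
  have "grad (\<lambda>x. u x powr (-a) * \<psi> x powr k) x = GG x" by (rule grad_eq[OF D])
  then show "grad (\<lambda>x. u x powr (-a) * \<psi> x powr k) x =
      (-a * u x powr (-a-1) * \<psi> x powr k) *\<^sub>R grad u x
      + (u x powr (-a) * (k * \<psi> x powr (k-1))) *\<^sub>R grad \<psi> x" by (simp add: GG_def)
  have gr: "grad (\<lambda>x. u x powr (-a) * \<psi> x powr k) = GG"
    using grad_eq[OF D] by auto
  have cu: "continuous_on UNIV u" using C1_cont[OF u(1)] .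
  have c\<psi>: "continuous_on UNIV \<psi>" using C1_cont[OF \<psi>C1] .
  have cgu: "continuous_on UNIV (grad u)" using C1_grad_cont[OF u(1)] .
  have cg\<psi>: "continuous_on UNIV (grad \<psi>)" using C1_grad_cont[OF \<psi>C1] .
  have "continuous_on UNIV GG"
    unfolding GG_def using u(2) \<psi>(2) k
    by (intro continuous_intros continuous_on_powr' cu c\<psi> cgu cg\<psi>) (auto simp: less_imp_neq[symmetric])
  then have "C1 (\<lambda>x. u x powr (-a) * \<psi> x powr k)"
    unfolding C1_def gr using D differentiableI by blast
  moreover have "compact (closure {x. u x powr (-a) * \<psi> x powr k \<noteq> 0})"
  proof -
    have sub: "closure {x. u x powr (-a) * \<psi> x powr k \<noteq> 0} \<subseteq> closure {x. \<psi> x \<noteq> 0}"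
      by (rule closure_mono) auto
    have "compact (closure {x. u x powr (-a) * \<psi> x powr k \<noteq> 0} \<inter> closure {x. \<psi> x \<noteq> 0})"
      using \<psi>(1) unfolding C1c_def by (intro closed_Int_compact) auto
    then show ?thesis using sub by (simp add: Int_absorb2)
  qed
  ultimately show "C1c (\<lambda>x. u x powr (-a) * \<psi> x powr k)" unfolding C1c_def by simp
qed


lemma L1loc_meas:
  fixes w :: "'a::euclidean_space \<Rightarrow> real"
  assumes "L1loc w"
  shows "w \<in> borel_measurable lebesgue"
proof (rule borel_measurable_LIMSEQ_real)
  fix n :: nat
  have "set_integrable lebesgue (cball 0 (real n)) w"
    using assms unfolding L1loc_def by simp
  then show "(\<lambda>x. indicator (cball 0 (real n)) x *\<^sub>R w x) \<in> borel_measurable lebesgue"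
    unfolding set_integrable_def by (rule borel_measurable_integrable)
next
  fix x :: 'a
  obtain N :: nat where N: "norm x \<le> real N" using real_arch_simple by blast
  have "\<forall>\<^sub>F n in sequentially. indicator (cball 0 (real n)) x *\<^sub>R w x = w x"
  proof (rule eventually_sequentiallyI[of N])
    fix n assume "N \<le> n"
    then have "x \<in> cball 0 (real n)" using N by (simp add: dist_norm)
    then show "indicator (cball 0 (real n)) x *\<^sub>R w x = w x" by simp
  qed
  then show "(\<lambda>n. indicator (cball 0 (real n)) x *\<^sub>R w x) \<longlonglongrightarrow> w x"
    by (rule tendsto_eventually)
qed

lemma int_compact:
  fixes w h :: "'a::euclidean_space \<Rightarrow> real"
  assumes "L1loc w" "compact K" "h \<in> borel_measurable lebesgue"
    "\<And>x. x \<notin> K \<Longrightarrow> h x = 0" "\<And>x. x \<in> K \<Longrightarrow> \<bar>h x\<bar> \<le> B"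
  shows "integrable lebesgue (\<lambda>x. w x * h x)"
proof (rule Bochner_Integration.integrable_bound[where f="\<lambda>x. B * (indicator K x *\<^sub>R w x)"])
  have "set_integrable lebesgue K w" using assms(1,2) unfolding L1loc_def by simp
  then have "integrable lebesgue (\<lambda>x. indicator K x *\<^sub>R w x)" unfolding set_integrable_def .
  then show "integrable lebesgue (\<lambda>x. B * (indicator K x *\<^sub>R w x))" by simp
  show "(\<lambda>x. w x * h x) \<in> borel_measurable lebesgue"
    using L1loc_meas[OF assms(1)] assms(3) by measurable
  show "AE x in lebesgue. norm (w x * h x) \<le> norm (B * (indicator K x *\<^sub>R w x))"
  proof (rule AE_I2)
    fix x show "norm (w x * h x) \<le> norm (B * (indicator K x *\<^sub>R w x))"
    proof (cases "x \<in> K")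
      case True
      have "\<bar>w x\<bar> * \<bar>h x\<bar> \<le> \<bar>w x\<bar> * \<bar>B\<bar>"
        using assms(5)[OF True] by (intro mult_left_mono) auto
      then show ?thesis using True by (simp add: abs_mult mult.commute)
    next
      case False then show ?thesis using assms(4) by simp
    qed
  qed
qed

lemma int_compact_cont:
  fixes w h :: "'a::euclidean_space \<Rightarrow> real"
  assumes "L1loc w" "compact K" "continuous_on UNIV h" "\<And>x. x \<notin> K \<Longrightarrow> h x = 0"
  shows "integrable lebesgue (\<lambda>x. w x * h x)"
proof -
  have "bounded (h ` K)"
    using assms(2,3) by (meson compact_continuous_image compact_imp_bounded continuous_on_subset subset_UNIV)
  then obtain B where B: "\<And>x. x \<in> K \<Longrightarrow> \<bar>h x\<bar> \<le> B"
    unfolding bounded_iff by fastforce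
  show ?thesis
    by (rule int_compact[OF assms(1,2) cont_borel_lebesgue[OF assms(3)] assms(4) B])
qed

lemma ennreal_integral_le_nn:
  fixes f :: "'a \<Rightarrow> real"
  assumes "integrable M f"
  shows "ennreal (integral\<^sup>L M f) \<le> (\<integral>\<^sup>+x. ennreal (f x) \<partial>M)"
proof -
  have "integral\<^sup>L M f \<le> integral\<^sup>L M (\<lambda>x. max (f x) 0)"
    using assms by (intro integral_mono) auto
  moreover have "(\<integral>\<^sup>+x. ennreal (max (f x) 0) \<partial>M) = ennreal (integral\<^sup>L M (\<lambda>x. max (f x) 0))"
    using assms by (intro nn_integral_eq_integral) auto
  moreover have "(\<lambda>x. ennreal (max (f x) 0)) = (\<lambda>x. ennreal (f x))"
    by (auto simp: max_def ennreal_neg)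
  ultimately show ?thesis by (metis ennreal_leI)
qed



lemma young_eps:
  fixes a \<epsilon> :: real
  assumes a: "0 < a" "a < 1" and e: "\<epsilon> > 0"
  shows "\<exists>C\<ge>0. \<forall>x y. 0 \<le> x \<longrightarrow> 0 \<le> y \<longrightarrow> x powr a * y powr (1 - a) \<le> \<epsilon> * x + C * y"
proof -
  define C where "C = (1 - a) * (a / \<epsilon>) powr (a / (1 - a))"
  have C0: "C \<ge> 0" unfolding C_def using a by simp
  have "x powr a * y powr (1 - a) \<le> \<epsilon> * x + C * y" if x: "0 \<le> x" and y: "0 \<le> y" for x y
  proof (cases "x = 0 \<or> y = 0")
    case True then show ?thesis using a C0 x y e by auto
  next
    case False
    then have xp: "x > 0" and yp: "y > 0" using x y by auto
    have Cp: "C > 0" unfolding C_def using a e by simp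
    have "((\<epsilon> / a) * x) powr a * ((C / (1 - a)) * y) powr (1 - a)
          \<le> a * ((\<epsilon> / a) * x) + (1 - a) * ((C / (1 - a)) * y)"
      using a e xp yp Cp by (intro Youngs_inequality_0) auto
    also have "\<dots> = \<epsilon> * x + C * y" using a by simp
    also have "((\<epsilon> / a) * x) powr a * ((C / (1 - a)) * y) powr (1 - a)
          = ((\<epsilon> / a) powr a * (C / (1 - a)) powr (1 - a)) * (x powr a * y powr (1 - a))"
      unfolding powr_mult by (simp add: mult_ac)
    also have "(\<epsilon> / a) powr a * (C / (1 - a)) powr (1 - a) = 1"
    proof -
      have "(C / (1 - a)) powr (1 - a) = (a / \<epsilon>) powr a"
        unfolding C_def using a by (simp add: powr_powr)
      then show ?thesis using a e by (simp add: powr_divide)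
    qed
    finally show ?thesis by simp
  qed
  then show ?thesis using C0 by blast
qed

lemma step1:
  fixes D B1 C1 y X t :: real
  assumes "D > 0" "\<bar>t\<bar> \<le> y * X" "y \<ge> 0" "X \<ge> 0"
  shows "-(D/2) * y\<^sup>2 + B1 * t + C1 * X\<^sup>2 \<le> -(D/4) * y\<^sup>2 + (B1\<^sup>2 / D + C1) * X\<^sup>2"
proof -
  have "B1 * t \<le> \<bar>B1\<bar> * \<bar>t\<bar>" by (metis abs_ge_self abs_mult)
  also have "\<dots> \<le> \<bar>B1\<bar> * (y * X)" using assms by (intro mult_left_mono) auto
  finally have "B1 * t \<le> \<bar>B1\<bar> * (y * X)" .
  moreover have "\<bar>B1\<bar> * (y * X) \<le> (D/4) * y\<^sup>2 + (B1\<^sup>2 / D) * X\<^sup>2"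
  proof -
    have "0 \<le> (D/2 * y - \<bar>B1\<bar> * X)\<^sup>2 / D" using assms by simp
    also have "(D/2 * y - \<bar>B1\<bar> * X)\<^sup>2 / D = (D/4) * y\<^sup>2 + (B1\<^sup>2 / D) * X\<^sup>2 - \<bar>B1\<bar> * (y * X)"
      using assms by (simp add: power2_eq_square field_simps)
    finally show ?thesis by simp
  qed
  ultimately show ?thesis by (simp add: algebra_simps)
qed

lemma step2:
  fixes p D C2 :: real
  assumes p: "p \<ge> 2" and D: "D > 0" and C2: "C2 > 0"
  shows "\<exists>C3\<ge>0. \<forall>G X. 0 \<le> G \<longrightarrow> 0 \<le> X \<longrightarrow>
     npow G (p - 2) * (-(D/4) * G\<^sup>2 + C2 * X\<^sup>2) \<le> C3 * X powr p"
proof (cases "p = 2")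
  case True
  have "npow G (p - 2) * (-(D/4) * G\<^sup>2 + C2 * X\<^sup>2) \<le> C2 * X powr p" if "0 \<le> X" for G X
  proof -
    have "X powr p = X\<^sup>2" using True that by (simp add: powr_realpow' [of X 2, simplified])
    then show ?thesis using True D by (simp add: npow_def)
  qed
  then show ?thesis using C2 by (intro exI[of _ C2]) auto
next
  case False
  then have p2: "p > 2" using p by simp
  have a: "0 < (p-2)/p" "(p-2)/p < 1" using p2 by auto
  obtain Cy where Cy: "Cy \<ge> 0" and Y: "\<And>x y. 0 \<le> x \<Longrightarrow> 0 \<le> y \<Longrightarrow>
      x powr ((p-2)/p) * y powr (1 - (p-2)/p) \<le> (D / (4 * C2)) * x + Cy * y"
    using young_eps[OF a, of "D / (4 * C2)"] D C2 by auto
  have "npow G (p - 2) * (-(D/4) * G\<^sup>2 + C2 * X\<^sup>2) \<le> (C2 * Cy) * X powr p"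
    if G: "0 \<le> G" and X: "0 \<le> X" for G X
  proof -
    have n: "npow G (p - 2) = G powr (p - 2)" using p2 by (simp add: npow_def)
    have e1: "(G powr p) powr ((p-2)/p) = G powr (p-2)" using p2 by (simp add: powr_powr)
    have e2: "(X powr p) powr (1 - (p-2)/p) = X\<^sup>2"
    proof -
      have "(X powr p) powr (1 - (p-2)/p) = X powr 2" using p2 by (simp add: powr_powr field_simps)
      then show ?thesis using X by (simp add: powr_realpow' [of X 2, simplified])
    qed
    have e3: "G powr (p - 2) * G\<^sup>2 = G powr p"
    proof (cases "G = 0")
      case True then show ?thesis using p2 by simp
    next
      case False
      then have "G\<^sup>2 = G powr 2" using G by (simp add: powr_realpow' [of G 2, simplified])
      then have "G powr (p - 2) * G\<^sup>2 = G powr (p - 2) * G powr 2" by simp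
      also have "\<dots> = G powr (p - 2 + 2)" by (rule powr_add[symmetric])
      finally show ?thesis by simp
    qed
    have "G powr (p-2) * X\<^sup>2 \<le> (D / (4 * C2)) * G powr p + Cy * X powr p"
      using Y[of "G powr p" "X powr p"] e1 e2 by simp
    then have "C2 * (G powr (p-2) * X\<^sup>2) \<le> C2 * ((D / (4 * C2)) * G powr p + Cy * X powr p)"
      using C2 by (intro mult_left_mono) auto
    then have "C2 * (G powr (p-2) * X\<^sup>2) \<le> (D/4) * G powr p + (C2 * Cy) * X powr p"
      using C2 by (simp add: algebra_simps)
    then show ?thesis unfolding n using e3 by (simp add: algebra_simps)
  qed
  then show ?thesis using Cy C2 by (intro exI[of _ "C2 * Cy"]) auto
qed



lemma D_pos:
  fixes p \<delta> \<beta> :: real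
  assumes p: "p \<ge> 2" and d: "\<delta> \<ge> 1" and b: "\<beta> > 0" "\<beta> < s_p p \<delta>"
  shows "\<delta> * (2 * (\<beta> + (p-2)/2) + 1) - (p - 1) * (\<beta> + (p-2)/2)\<^sup>2 > 0"
proof (cases "p = 2")
  case True
  have s: "\<beta> < \<delta> + sqrt (\<delta>\<^sup>2 + \<delta>)" using b True by (simp add: s_p_def)
  have sq: "sqrt (\<delta>\<^sup>2 + \<delta>) \<ge> \<delta>" using d by (simp add: real_le_rsqrt)
  have "(\<beta> - \<delta>)\<^sup>2 < (sqrt (\<delta>\<^sup>2 + \<delta>))\<^sup>2"
  proof -
    have "\<bar>\<beta> - \<delta>\<bar> < sqrt (\<delta>\<^sup>2 + \<delta>)" using s sq b by auto
    then show ?thesis by (metis abs_ge_zero power2_abs power_strict_mono zero_less_numeral)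
  qed
  then have "(\<beta> - \<delta>)\<^sup>2 < \<delta>\<^sup>2 + \<delta>" using d by simp
  then show ?thesis using True by (simp add: power2_eq_square algebra_simps)
next
  case False
  then have p2: "p > 2" using p by simp
  define a where "a = \<beta> + (p-2)/2"
  define am where "am = 2 * \<delta> / (p - 1) - 1/2"
  have a0: "a > 0" using b p unfolding a_def by (simp add: add_pos_nonneg)
  have "\<beta> < 2 * \<delta> / (p - 1) - (p - 1) / 2" using b False by (simp add: s_p_def)
  moreover have "(p - 1) / 2 = (p - 2) / 2 + 1/2" by (simp add: field_simps)
  ultimately have aam: "a < am" unfolding a_def am_def by linarith
  have key: "(p - 1) * am = 2 * \<delta> - (p - 1) / 2" using p2 unfolding am_def by (simp add: field_simps)
  have "(p - 1) * a\<^sup>2 \<le> (p - 1) * (a * am)"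
    using a0 aam p2 by (intro mult_left_mono) (auto simp: power2_eq_square)
  also have "\<dots> = a * (2 * \<delta> - (p - 1) / 2)" using key by (metis mult.left_commute)
  finally have "(p - 1) * a\<^sup>2 \<le> 2 * \<delta> * a - a * (p - 1) / 2" by (simp add: algebra_simps)
  moreover have "a * (p - 1) / 2 > 0" using a0 p2 by simp
  ultimately have h: "(p - 1) * a\<^sup>2 < 2 * \<delta> * a + \<delta>" using d by linarith
  have "\<delta> * (2 * a + 1) - (p - 1) * a\<^sup>2 > 0" using h by (simp add: algebra_simps)
  then show ?thesis unfolding a_def .
qed



lemma pw2: "(x::real) > 0 \<Longrightarrow> (x powr a)\<^sup>2 = x powr (2 * a)"
  by (simp add: power2_eq_square powr_add[symmetric])

lemma test_ids:
  fixes U s \<alpha> q \<delta> Gv :: real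
  assumes U: "U > 0" and s: "s > 0" and q: "q = 2 * \<alpha>+1+\<delta>"
  defines "Z \<equiv> U powr (-2 * \<alpha>-2) * s powr q" and "T \<equiv> U / s"
    and "j \<equiv> Gv * U powr (-q) * s powr q"
  shows "(-\<alpha> * U powr (-\<alpha>-1) * s powr (q/2))\<^sup>2 = \<alpha>\<^sup>2 * Z"
    and "2 * (-\<alpha> * U powr (-\<alpha>-1) * s powr (q/2)) * (U powr (-\<alpha>) * ((q/2) * s powr (q/2-1))) = -\<alpha> * q * Z * T"
    and "(U powr (-\<alpha>) * ((q/2) * s powr (q/2-1)))\<^sup>2 = (q/2)\<^sup>2 * Z * T\<^sup>2"
    and "-(2 * \<alpha>+1) * U powr (-(2 * \<alpha>+1)-1) * s powr q = -(2 * \<alpha>+1) * Z"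
    and "U powr (-(2 * \<alpha>+1)) * (q * s powr (q-1)) = q * Z * T"
    and "Gv * fnl' \<delta> \<delta> U * (U powr (-\<alpha>) * s powr (q/2))\<^sup>2 = 2 * \<delta> * j"
    and "Gv * fnl \<delta> \<delta> U * (U powr (-(2 * \<alpha>+1)) * s powr q) = -2 * j"
    and "Gv * (s/U) powr q = j"
proof -
  have Ue: "\<And>a. U powr a = exp (a * ln U)" using U by (simp add: powr_def)
  have se: "\<And>a. s powr a = exp (a * ln s)" using s by (simp add: powr_def)
  have T: "T = exp (ln U - ln s)" unfolding T_def using U s by (simp add: exp_diff)
  show "(-\<alpha> * U powr (-\<alpha>-1) * s powr (q/2))\<^sup>2 = \<alpha>\<^sup>2 * Z"
    unfolding Z_def Ue se by (simp add: power2_eq_square mult_exp_exp algebra_simps)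
  show "2 * (-\<alpha> * U powr (-\<alpha>-1) * s powr (q/2)) * (U powr (-\<alpha>) * ((q/2) * s powr (q/2-1))) = -\<alpha> * q * Z * T"
    unfolding Z_def Ue se T by (simp add: mult_exp_exp algebra_simps)
  show "(U powr (-\<alpha>) * ((q/2) * s powr (q/2-1)))\<^sup>2 = (q/2)\<^sup>2 * Z * T\<^sup>2"
    unfolding Z_def Ue se T by (simp add: power2_eq_square mult_exp_exp algebra_simps)
  show "-(2 * \<alpha>+1) * U powr (-(2 * \<alpha>+1)-1) * s powr q = -(2 * \<alpha>+1) * Z"
    unfolding Z_def Ue se by (simp add: mult_exp_exp algebra_simps)
  show "U powr (-(2 * \<alpha>+1)) * (q * s powr (q-1)) = q * Z * T"
    unfolding Z_def Ue se T by (simp add: mult_exp_exp algebra_simps)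
  show "Gv * fnl' \<delta> \<delta> U * (U powr (-\<alpha>) * s powr (q/2))\<^sup>2 = 2 * \<delta> * j"
    unfolding j_def fnl'_def Ue se q by (simp add: power2_eq_square mult_exp_exp algebra_simps)
  show "Gv * fnl \<delta> \<delta> U * (U powr (-(2 * \<alpha>+1)) * s powr q) = -2 * j"
    unfolding j_def fnl_def Ue se q by (simp add: mult_exp_exp algebra_simps)
  show "Gv * (s/U) powr q = j"
    unfolding j_def powr_divide Ue se by (simp add: exp_minus field_simps)
qed



lemma scalar_main:
  fixes p \<delta> \<beta> M0 :: real
  assumes p: "p \<ge> 2" and d: "\<delta> \<ge> 1" and b: "\<beta> > 0"
    and D: "\<delta> * (2 * (\<beta> + (p-2)/2) + 1) - (p - 1) * (\<beta> + (p-2)/2)\<^sup>2 > 0" and M0: "M0 \<ge> 0"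
  defines "\<alpha> \<equiv> \<beta> + (p-2)/2" and "q \<equiv> 2 * \<beta> + p - 1 + \<delta>" and "\<theta> \<equiv> (2 * \<beta> + p - 1 + \<delta>) / (p - 1 + \<delta>)"
    and "\<mu> \<equiv> ((p - 1) * (\<beta> + (p-2)/2)\<^sup>2 / (2 * (\<beta> + (p-2)/2) + 1) + \<delta>) / 2"
  shows "\<exists>\<epsilon>>0. \<exists>C\<ge>0. \<forall>Wv Gv U s G P e. 0 < Wv \<longrightarrow> 0 < Gv \<longrightarrow> 1 / Gv \<le> M0 \<longrightarrow> 0 < U \<longrightarrow>
     0 < s \<longrightarrow> s \<le> 1 \<longrightarrow> 0 \<le> G \<longrightarrow> 0 \<le> P \<longrightarrow> \<bar>e\<bar> \<le> G * P \<longrightarrow>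
     (p - 1) * (Wv * npow G (p - 2) * ((-\<alpha> * U powr (-\<alpha>-1) * s powr (q/2))\<^sup>2 * G\<^sup>2
        + 2 * (-\<alpha> * U powr (-\<alpha>-1) * s powr (q/2)) * (U powr (-\<alpha>) * ((q/2) * s powr (q/2-1))) * e
        + (U powr (-\<alpha>) * ((q/2) * s powr (q/2-1)))\<^sup>2 * P\<^sup>2))
     - Gv * fnl' \<delta> \<delta> U * (U powr (-\<alpha>) * s powr (q/2))\<^sup>2
     + \<mu> * (Wv * npow G (p - 2) * ((-(2 * \<alpha>+1) * U powr (-(2 * \<alpha>+1)-1) * s powr q) * G\<^sup>2
           + (U powr (-(2 * \<alpha>+1)) * (q * s powr (q-1))) * e)
         - Gv * fnl \<delta> \<delta> U * (U powr (-(2 * \<alpha>+1)) * s powr q))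
     + \<epsilon> * (Gv * (s / U) powr q) \<le> C * (Wv powr \<theta> * P powr (p * \<theta>))"
proof -
  have \<mu>_eq: "\<mu> = ((p - 1) * \<alpha>\<^sup>2 / (2 * \<alpha> + 1) + \<delta>) / 2" unfolding \<mu>_def \<alpha>_def ..
  define Dv where "Dv = \<delta> * (2 * \<alpha> + 1) - (p - 1) * \<alpha>\<^sup>2"
  have Dv: "Dv > 0" using D unfolding Dv_def \<alpha>_def .
  have a0: "\<alpha> > 0" using b p unfolding \<alpha>_def by (simp add: add_pos_nonneg)
  have qa: "q = 2 * \<alpha> + 1 + \<delta>" unfolding q_def \<alpha>_def by (simp add: field_simps)
  have q0: "q > 0" using a0 d qa by simp
  have q2: "q / 2 > 1" using b p d unfolding q_def by simp
  have \<theta>q: "\<theta> = q / (p - 1 + \<delta>)" unfolding \<theta>_def q_def ..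
  define B1 where "B1 = q * (\<mu> - (p - 1) * \<alpha>)"
  define C1 where "C1 = (p - 1) * (q/2)\<^sup>2"
  define C2 where "C2 = B1\<^sup>2 / Dv + C1"
  have C1: "C1 > 0" unfolding C1_def using p q0 by simp
  have C2: "C2 > 0" unfolding C2_def using C1 Dv by (simp add: add_nonneg_pos)
  obtain C3 where C3: "C3 \<ge> 0" and S2: "\<And>G X. 0 \<le> G \<Longrightarrow> 0 \<le> X \<Longrightarrow>
      npow G (p - 2) * (-(Dv/4) * G\<^sup>2 + C2 * X\<^sup>2) \<le> C3 * X powr p"
    using step2[OF p Dv C2] by blast
  define a where "a = 2 * \<beta> / q"
  have a: "0 < a" "a < 1" unfolding a_def using b q0 p d q_def by auto
  have aq: "a * q = 2 * \<beta>" unfolding a_def using q0 by simp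
  have pd: "p - 1 + \<delta> > 0" using p d by simp
  have "1 - a = (q - 2 * \<beta>) / q" unfolding a_def using q0 by (simp add: diff_divide_distrib)
  also have "q - 2 * \<beta> = p - 1 + \<delta>" unfolding q_def by simp
  finally have "1 - a = (p - 1 + \<delta>) / q" .
  then have \<theta>a: "\<theta> * (1 - a) = 1" unfolding \<theta>q using q0 pd by simp
  have \<theta>0: "\<theta> > 0" unfolding \<theta>q using q0 p d by simp
  define \<epsilon>3 where "\<epsilon>3 = Dv / (2 * (2 * \<alpha> + 1) * (C3 + 1))"
  have \<epsilon>3: "\<epsilon>3 > 0" unfolding \<epsilon>3_def using Dv a0 C3 by simp
  obtain C' where C': "C' \<ge> 0" and Y: "\<And>x y. 0 \<le> x \<Longrightarrow> 0 \<le> y \<Longrightarrow>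
      x powr a * y powr (1 - a) \<le> \<epsilon>3 * x + C' * y"
    using young_eps[OF a \<epsilon>3] by blast
  define \<epsilon> where "\<epsilon> = Dv / (2 * (2 * \<alpha> + 1))"
  have \<epsilon>: "\<epsilon> > 0" unfolding \<epsilon>_def using Dv a0 by simp
  define C where "C = (C3 + 1) * C' * M0 powr (a * \<theta>)"
  have C: "C \<ge> 0" unfolding C_def using C3 C' by simp
  have coefA: "(p - 1) * \<alpha>\<^sup>2 - \<mu> * (2 * \<alpha> + 1) = -(Dv/2)"
    unfolding \<mu>_eq Dv_def using a0 by (simp add: field_simps)
  have coefJ: "2 * \<mu> - 2 * \<delta> = -(Dv / (2 * \<alpha> + 1))"
    unfolding \<mu>_eq Dv_def using a0 by (simp add: field_simps)
  have eps_rel: "(C3 + 1) * \<epsilon>3 = \<epsilon>"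
  proof -
    have "C3 + 1 \<noteq> 0" using C3 by simp
    then show ?thesis unfolding \<epsilon>3_def \<epsilon>_def by (simp add: mult.commute[of _ "C3 + 1"] mult.assoc)
  qed
  have key: "(p - 1) * (Wv * npow G (p - 2) * ((-\<alpha> * U powr (-\<alpha>-1) * s powr (q/2))\<^sup>2 * G\<^sup>2
        + 2 * (-\<alpha> * U powr (-\<alpha>-1) * s powr (q/2)) * (U powr (-\<alpha>) * ((q/2) * s powr (q/2-1))) * e
        + (U powr (-\<alpha>) * ((q/2) * s powr (q/2-1)))\<^sup>2 * P\<^sup>2))
     - Gv * fnl' \<delta> \<delta> U * (U powr (-\<alpha>) * s powr (q/2))\<^sup>2
     + \<mu> * (Wv * npow G (p - 2) * ((-(2 * \<alpha>+1) * U powr (-(2 * \<alpha>+1)-1) * s powr q) * G\<^sup>2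
           + (U powr (-(2 * \<alpha>+1)) * (q * s powr (q-1))) * e)
         - Gv * fnl \<delta> \<delta> U * (U powr (-(2 * \<alpha>+1)) * s powr q))
     + \<epsilon> * (Gv * (s / U) powr q) \<le> C * (Wv powr \<theta> * P powr (p * \<theta>))"
    if Wv: "0 < Wv" and Gv: "0 < Gv" and GM: "1 / Gv \<le> M0" and U: "0 < U" and s: "0 < s"
      and s1: "s \<le> 1" and G: "0 \<le> G" and P: "0 \<le> P" and e: "\<bar>e\<bar> \<le> G * P"
    for Wv Gv U s G P e :: real
  proof -
    define Z where "Z = U powr (-2 * \<alpha> - 2) * s powr q"
    define T where "T = U / s"
    define j where "j = Gv * U powr (-q) * s powr q"
    define N where "N = npow G (p - 2)"
    define X where "X = T * P"
    note ids = test_ids[OF U s qa]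
    have Z0: "Z \<ge> 0" unfolding Z_def by simp
    have T0: "T > 0" unfolding T_def using U s by simp
    have j0: "j \<ge> 0" unfolding j_def using Gv by simp
    have N0: "N \<ge> 0" unfolding N_def npow_def by simp
    have X0: "X \<ge> 0" unfolding X_def using T0 P by simp
    have TeX: "\<bar>T * e\<bar> \<le> G * X"
    proof -
      have "\<bar>T * e\<bar> = T * \<bar>e\<bar>" using T0 by (simp add: abs_mult)
      also have "\<dots> \<le> T * (G * P)" using T0 e by (intro mult_left_mono) auto
      finally show ?thesis unfolding X_def by (simp add: mult_ac)
    qed
    have LHS: "(p - 1) * (Wv * npow G (p - 2) * ((-\<alpha> * U powr (-\<alpha>-1) * s powr (q/2))\<^sup>2 * G\<^sup>2
        + 2 * (-\<alpha> * U powr (-\<alpha>-1) * s powr (q/2)) * (U powr (-\<alpha>) * ((q/2) * s powr (q/2-1))) * e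
        + (U powr (-\<alpha>) * ((q/2) * s powr (q/2-1)))\<^sup>2 * P\<^sup>2))
     - Gv * fnl' \<delta> \<delta> U * (U powr (-\<alpha>) * s powr (q/2))\<^sup>2
     + \<mu> * (Wv * npow G (p - 2) * ((-(2 * \<alpha>+1) * U powr (-(2 * \<alpha>+1)-1) * s powr q) * G\<^sup>2
           + (U powr (-(2 * \<alpha>+1)) * (q * s powr (q-1))) * e)
         - Gv * fnl \<delta> \<delta> U * (U powr (-(2 * \<alpha>+1)) * s powr q))
     + \<epsilon> * (Gv * (s / U) powr q)
     = Wv * Z * (N * (((p - 1) * \<alpha>\<^sup>2 - \<mu> * (2 * \<alpha> + 1)) * G\<^sup>2 + B1 * (T * e) + C1 * X\<^sup>2))
       + (2 * \<mu> - 2 * \<delta>) * j + \<epsilon> * j"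
      unfolding ids N_def[symmetric] B1_def C1_def X_def Z_def[symmetric] T_def[symmetric]
      unfolding j_def
      by (simp add: algebra_simps power2_eq_square)
    have brk: "N * (-(Dv/2) * G\<^sup>2 + B1 * (T * e) + C1 * X\<^sup>2) \<le> C3 * X powr p"
    proof -
      have "-(Dv/2) * G\<^sup>2 + B1 * (T * e) + C1 * X\<^sup>2 \<le> -(Dv/4) * G\<^sup>2 + C2 * X\<^sup>2"
        unfolding C2_def by (rule step1[OF Dv TeX G X0])
      then have "N * (-(Dv/2) * G\<^sup>2 + B1 * (T * e) + C1 * X\<^sup>2) \<le> N * (-(Dv/4) * G\<^sup>2 + C2 * X\<^sup>2)"
        using N0 by (intro mult_left_mono) auto
      also have "\<dots> \<le> C3 * X powr p" unfolding N_def by (rule S2[OF G X0])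
      finally show ?thesis .
    qed
    have Ue: "\<And>x. U powr x = exp (x * ln U)" using U by (simp add: powr_def)
    have se: "\<And>x. s powr x = exp (x * ln s)" using s by (simp add: powr_def)
    have Ge: "\<And>x. Gv powr x = exp (x * ln Gv)" using Gv by (simp add: powr_def)
    have S6: "Z * X powr p = U powr (-2 * \<beta>) * s powr (q - p) * P powr p"
    proof -
      have Tp: "T powr p = exp (p * ln U - p * ln s)"
        unfolding T_def using U s by (simp add: powr_def ln_div algebra_simps)
      have "Z * X powr p = exp ((-2 * \<alpha> - 2) * ln U + q * ln s + (p * ln U - p * ln s)) * P powr p"
        unfolding X_def powr_mult Tp Z_def Ue se by (simp add: exp_add mult_ac)
      also have "(-2 * \<alpha> - 2) * ln U + q * ln s + (p * ln U - p * ln s) = (-2 * \<beta>) * ln U + (q - p) * ln s"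
        unfolding \<alpha>_def by (simp add: algebra_simps add_divide_distrib diff_divide_distrib)
      finally show ?thesis unfolding Ue se by (simp add: exp_add exp_diff exp_minus field_simps)
    qed
    define Y0 where "Y0 = Wv * Gv powr (-a) * s powr (\<delta> - 1) * P powr p"
    have Y00: "Y0 \<ge> 0" unfolding Y0_def using Wv by simp
    have S7: "Wv * (U powr (-2 * \<beta>) * s powr (q - p) * P powr p) = j powr a * (Y0 powr \<theta>) powr (1 - a)"
    proof -
      have Y1: "(Y0 powr \<theta>) powr (1 - a) = Y0" using \<theta>a Y00 by (simp add: powr_powr)
      have "j = exp (ln Gv - q * ln U + q * ln s)"
        unfolding j_def Ue se using Gv by (simp add: exp_add exp_diff exp_minus field_simps)
      then have jpa: "j powr a = exp (a * (ln Gv - q * ln U + q * ln s))"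
        by (simp add: powr_def)
      have qp: "q - p = 2 * \<beta> + \<delta> - 1" unfolding q_def by simp
      have "a * (ln Gv - q * ln U + q * ln s) = a * ln Gv - (a * q) * ln U + (a * q) * ln s"
        by (simp add: algebra_simps)
      also have "\<dots> = a * ln Gv - (2 * \<beta>) * ln U + (2 * \<beta>) * ln s" unfolding aq ..
      finally have E: "a * (ln Gv - q * ln U + q * ln s) + (-a) * ln Gv + (\<delta> - 1) * ln s
          = (-2 * \<beta>) * ln U + (q - p) * ln s" unfolding qp by (simp add: algebra_simps)
      have "j powr a * Y0 = Wv * P powr p * exp (a * (ln Gv - q * ln U + q * ln s) + (-a) * ln Gv + (\<delta> - 1) * ln s)"
        unfolding jpa Y0_def Ge se by (simp add: exp_add exp_diff exp_minus mult_ac divide_inverse)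
      also have "\<dots> = Wv * P powr p * exp ((-2 * \<beta>) * ln U + (q - p) * ln s)" unfolding E ..
      also have "\<dots> = Wv * (U powr (-2 * \<beta>) * s powr (q - p) * P powr p)"
        unfolding Ue se by (simp add: exp_add exp_diff exp_minus mult_ac divide_inverse)
      finally show ?thesis unfolding Y1 by simp
    qed
    have S9: "Y0 powr \<theta> \<le> M0 powr (a * \<theta>) * (Wv powr \<theta> * P powr (p * \<theta>))"
    proof -
      have "Y0 powr \<theta> = Wv powr \<theta> * (1 / Gv) powr (a * \<theta>) * s powr ((\<delta> - 1) * \<theta>) * P powr (p * \<theta>)"
        unfolding Y0_def using Gv by (simp add: powr_mult powr_powr powr_divide powr_minus_divide)
      also have "\<dots> \<le> Wv powr \<theta> * M0 powr (a * \<theta>) * 1 * P powr (p * \<theta>)"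
      proof -
        have "(1 / Gv) powr (a * \<theta>) \<le> M0 powr (a * \<theta>)"
          using GM Gv a \<theta>0 by (intro powr_mono2) auto
        moreover have "s powr ((\<delta> - 1) * \<theta>) \<le> 1"
          using powr_mono2[of "(\<delta> - 1) * \<theta>" s 1] s s1 d \<theta>0 by simp
        ultimately show ?thesis
          by (intro mult_mono mult_right_mono) auto
      qed
      finally show ?thesis by (simp add: mult_ac)
    qed
    have main: "Wv * Z * (N * (-(Dv/2) * G\<^sup>2 + B1 * (T * e) + C1 * X\<^sup>2)) \<le> (C3 + 1) * (\<epsilon>3 * j + C' * Y0 powr \<theta>)"
    proof -
      have "Wv * Z * (N * (-(Dv/2) * G\<^sup>2 + B1 * (T * e) + C1 * X\<^sup>2)) \<le> Wv * Z * (C3 * X powr p)"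
        using brk Wv Z0 by (intro mult_left_mono) auto
      also have "\<dots> = C3 * (j powr a * (Y0 powr \<theta>) powr (1 - a))"
        using S6 S7 by (simp add: mult_ac)
      also have "\<dots> \<le> (C3 + 1) * (j powr a * (Y0 powr \<theta>) powr (1 - a))"
        by (intro mult_right_mono) auto
      also have "\<dots> \<le> (C3 + 1) * (\<epsilon>3 * j + C' * Y0 powr \<theta>)"
        using Y[OF j0, of "Y0 powr \<theta>"] C3 by (intro mult_left_mono) auto
      finally show ?thesis .
    qed
    have fin: "Wv * Z * (N * (-(Dv/2) * G\<^sup>2 + B1 * (T * e) + C1 * X\<^sup>2)) - (Dv / (2 * \<alpha> + 1)) * j + \<epsilon> * j
        \<le> C * (Wv powr \<theta> * P powr (p * \<theta>))"
    proof -
      have "(C3 + 1) * (\<epsilon>3 * j + C' * Y0 powr \<theta>) = \<epsilon> * j + (C3 + 1) * C' * Y0 powr \<theta>"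
        unfolding eps_rel[symmetric] by (simp add: algebra_simps)
      moreover have "(Dv / (2 * \<alpha> + 1)) * j = 2 * (\<epsilon> * j)"
      proof -
        have "(Dv / (2 * \<alpha> + 1)) = 2 * \<epsilon>" unfolding \<epsilon>_def using a0 by (simp add: field_simps)
        then show ?thesis by simp
      qed
      moreover have "(C3 + 1) * C' * Y0 powr \<theta> \<le> C * (Wv powr \<theta> * P powr (p * \<theta>))"
        unfolding C_def using S9 C3 C' by (simp add: mult.assoc mult_left_mono)
      ultimately show ?thesis using main j0 \<epsilon> by linarith
    qed
    show "(p - 1) * (Wv * npow G (p - 2) * ((-\<alpha> * U powr (-\<alpha>-1) * s powr (q/2))\<^sup>2 * G\<^sup>2
        + 2 * (-\<alpha> * U powr (-\<alpha>-1) * s powr (q/2)) * (U powr (-\<alpha>) * ((q/2) * s powr (q/2-1))) * e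
        + (U powr (-\<alpha>) * ((q/2) * s powr (q/2-1)))\<^sup>2 * P\<^sup>2))
     - Gv * fnl' \<delta> \<delta> U * (U powr (-\<alpha>) * s powr (q/2))\<^sup>2
     + \<mu> * (Wv * npow G (p - 2) * ((-(2 * \<alpha>+1) * U powr (-(2 * \<alpha>+1)-1) * s powr q) * G\<^sup>2
           + (U powr (-(2 * \<alpha>+1)) * (q * s powr (q-1))) * e)
         - Gv * fnl \<delta> \<delta> U * (U powr (-(2 * \<alpha>+1)) * s powr q))
     + \<epsilon> * (Gv * (s / U) powr q) \<le> C * (Wv powr \<theta> * P powr (p * \<theta>))"
      unfolding LHS coefA coefJ using fin by simp
  qed
  show ?thesis using key \<epsilon> C by blast
qed




lemma norm_comb:
  fixes A B :: "'a::euclidean_space"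
  shows "(norm (c1 *\<^sub>R A + c2 *\<^sub>R B))\<^sup>2 = c1\<^sup>2 * (norm A)\<^sup>2 + 2 * c1 * c2 * (A \<bullet> B) + c2\<^sup>2 * (norm B)\<^sup>2"
  unfolding power2_norm_eq_inner
  by (simp add: inner_add_left inner_add_right inner_commute[of B A] algebra_simps power2_eq_square)

lemma inner_comb:
  fixes A B :: "'a::euclidean_space"
  shows "A \<bullet> (d1 *\<^sub>R A + d2 *\<^sub>R B) = d1 * (norm A)\<^sup>2 + d2 * (A \<bullet> B)"
  by (simp add: inner_add_right power2_norm_eq_inner)

lemma Linf_AE:
  fixes f :: "'a::euclidean_space \<Rightarrow> real"
  assumes "Linf f" "Linf_norm f = m"
  shows "AE x in lebesgue. \<bar>f x\<bar> \<le> \<bar>m\<bar> + 1"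
proof -
  define S where "S = {M. 0 \<le> M \<and> (AE x in lebesgue. \<bar>f x\<bar> \<le> M)}"
  obtain M where M: "AE x in lebesgue. \<bar>f x\<bar> \<le> M" using assms(1) unfolding Linf_def by blast
  have "max M 0 \<in> S" unfolding S_def using M by (auto elim: AE_mp)
  then have ne: "S \<noteq> {}" by blast
  have bdd: "bdd_below S" unfolding S_def by (rule bdd_belowI[of _ 0]) auto
  have "Inf S < \<bar>m\<bar> + 1" using assms(2) unfolding Linf_norm_def S_def by simp
  then obtain M' where "M' \<in> S" "M' < \<bar>m\<bar> + 1" using cInf_less_iff[OF ne bdd] by blast
  then show ?thesis unfolding S_def by (auto elim: AE_mp)
qed

lemma npow_nonneg: "npow x a \<ge> 0"
  unfolding npow_def by simp

lemma T2_le: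
  fixes A V :: "'a::euclidean_space"
  assumes "W \<ge> 0"
  shows "(if A = 0 then 0 else W * norm A powr (p - 4) * (A \<bullet> V)\<^sup>2) \<le> W * npow (norm A) (p - 2) * (norm V)\<^sup>2"
proof (cases "A = 0")
  case True then show ?thesis using assms by (simp add: npow_nonneg)
next
  case False
  then have nA: "norm A > 0" by simp
  have cs: "(A \<bullet> V)\<^sup>2 \<le> (norm A)\<^sup>2 * (norm V)\<^sup>2"
    by (metis Cauchy_Schwarz_ineq power2_norm_eq_inner)
  have e: "norm A powr (p - 4) * (norm A)\<^sup>2 = npow (norm A) (p - 2)"
  proof -
    have "(norm A)\<^sup>2 = norm A powr 2" using nA by (simp add: powr_realpow' [of "norm A" 2, simplified])
    then have "norm A powr (p - 4) * (norm A)\<^sup>2 = norm A powr (p - 4) * norm A powr 2" by simp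
    also have "\<dots> = norm A powr (p - 4 + 2)" by (rule powr_add[symmetric])
    finally show ?thesis using nA by (simp add: npow_def)
  qed
  have "W * norm A powr (p - 4) * (A \<bullet> V)\<^sup>2 \<le> W * norm A powr (p - 4) * ((norm A)\<^sup>2 * (norm V)\<^sup>2)"
    using cs assms by (intro mult_left_mono) auto
  also have "\<dots> = W * npow (norm A) (p - 2) * (norm V)\<^sup>2" using e by (simp add: mult_ac)
  finally show ?thesis using False by simp
qed



lemma main_bound:
  fixes w g u \<psi> :: "'a::euclidean_space \<Rightarrow> real"
  assumes p: "p \<ge> 2" and d: "\<delta> \<ge> 1" and b: "\<beta> > 0" and \<epsilon>: "\<epsilon> > 0" and C: "C \<ge> 0"
    and \<alpha>: "\<alpha> = \<beta> + (p-2)/2" and q: "q = 2 * \<beta> + p - 1 + \<delta>"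
    and SM: "\<forall>Wv Gv U s G P e. 0 < Wv \<longrightarrow> 0 < Gv \<longrightarrow> 1 / Gv \<le> M0 \<longrightarrow> 0 < U \<longrightarrow>
     0 < s \<longrightarrow> s \<le> 1 \<longrightarrow> 0 \<le> G \<longrightarrow> 0 \<le> P \<longrightarrow> \<bar>e\<bar> \<le> G * P \<longrightarrow>
     (p - 1) * (Wv * npow G (p - 2) * ((-\<alpha> * U powr (-\<alpha>-1) * s powr (q/2))\<^sup>2 * G\<^sup>2
        + 2 * (-\<alpha> * U powr (-\<alpha>-1) * s powr (q/2)) * (U powr (-\<alpha>) * ((q/2) * s powr (q/2-1))) * e
        + (U powr (-\<alpha>) * ((q/2) * s powr (q/2-1)))\<^sup>2 * P\<^sup>2))
     - Gv * fnl' \<delta> \<delta> U * (U powr (-\<alpha>) * s powr (q/2))\<^sup>2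
     + \<mu> * (Wv * npow G (p - 2) * ((-(2 * \<alpha>+1) * U powr (-(2 * \<alpha>+1)-1) * s powr q) * G\<^sup>2
           + (U powr (-(2 * \<alpha>+1)) * (q * s powr (q-1))) * e)
         - Gv * fnl \<delta> \<delta> U * (U powr (-(2 * \<alpha>+1)) * s powr q))
     + \<epsilon> * (Gv * (s / U) powr q) \<le> C * (Wv powr \<theta> * P powr (p * \<theta>))"
    and Lw: "L1loc w" and Lg: "L1loc g" and wpos: "AE x in lebesgue. w x > 0"
    and gpos: "AE x in lebesgue. g x > 0" and gM: "AE x in lebesgue. \<bar>1 / g x\<bar> \<le> M0"
    and uC1: "C1 u" and upos: "\<forall>x. u x > 0" and weak: "weak_solution p \<delta> \<delta> w g u"
    and stab: "stable p \<delta> \<delta> w g u"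
    and \<psi>c: "C1c \<psi>" and \<psi>01: "\<forall>x. 0 \<le> \<psi> x \<and> \<psi> x \<le> 1"
  shows "(\<integral>\<^sup>+ x. ennreal (g x * (\<psi> x / u x) powr q) \<partial>lebesgue)
         \<le> ennreal (C / \<epsilon> + 1) * (\<integral>\<^sup>+ x. ennreal (w x powr \<theta> * norm (grad \<psi> x) powr (p * \<theta>)) \<partial>lebesgue)"
proof -
  have \<psi>C1: "C1 \<psi>" using \<psi>c unfolding C1c_def by simp
  have \<psi>0: "\<forall>x. \<psi> x \<ge> 0" using \<psi>01 by simp
  have a0: "\<alpha> > 0" using b p unfolding \<alpha> by (simp add: add_pos_nonneg)
  have q2: "q / 2 > 1" using b p d unfolding q by simp
  have q1: "q > 1" using q2 by simp
  define \<phi>1 where "\<phi>1 = (\<lambda>x. u x powr (-\<alpha>) * \<psi> x powr (q/2))"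
  define \<phi>2 where "\<phi>2 = (\<lambda>x. u x powr (-(2 * \<alpha> + 1)) * \<psi> x powr q)"
  have \<phi>1c: "C1c \<phi>1" unfolding \<phi>1_def by (rule test_fun(1)[OF uC1 upos \<psi>c \<psi>0 q2])
  have \<phi>2c: "C1c \<phi>2" unfolding \<phi>2_def by (rule test_fun(1)[OF uC1 upos \<psi>c \<psi>0 q1])
  have g1: "\<And>x. grad \<phi>1 x = (-\<alpha> * u x powr (-\<alpha>-1) * \<psi> x powr (q/2)) *\<^sub>R grad u x
      + (u x powr (-\<alpha>) * ((q/2) * \<psi> x powr (q/2-1))) *\<^sub>R grad \<psi> x"
    unfolding \<phi>1_def by (rule test_fun(2)[OF uC1 upos \<psi>c \<psi>0 q2])
  have g2: "\<And>x. grad \<phi>2 x = (-(2 * \<alpha>+1) * u x powr (-(2 * \<alpha>+1)-1) * \<psi> x powr q) *\<^sub>R grad u x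
      + (u x powr (-(2 * \<alpha>+1)) * (q * \<psi> x powr (q-1))) *\<^sub>R grad \<psi> x"
    unfolding \<phi>2_def by (rule test_fun(2)[OF uC1 upos \<psi>c \<psi>0 q1])
  define K where "K = closure {x. \<psi> x \<noteq> 0}"
  have cK: "compact K" using \<psi>c unfolding C1c_def K_def by simp
  have out: "\<psi> x = 0" if "x \<notin> K" for x
  proof (rule ccontr)
    assume "\<psi> x \<noteq> 0"
    then have "x \<in> {x. \<psi> x \<noteq> 0}" by simp
    then have "x \<in> K" unfolding K_def using closure_subset by (rule subsetD[rotated])
    then show False using that by simp
  qed
  have z1: "\<And>x. \<psi> x = 0 \<Longrightarrow> grad \<phi>1 x = 0 \<and> \<phi>1 x = 0" using g1 q2 unfolding \<phi>1_def by simp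
  have z2: "\<And>x. \<psi> x = 0 \<Longrightarrow> grad \<phi>2 x = 0 \<and> \<phi>2 x = 0" using g2 q1 unfolding \<phi>2_def by simp
  have cu: "continuous_on UNIV u" by (rule C1_cont[OF uC1])
  have c\<psi>: "continuous_on UNIV \<psi>" by (rule C1_cont[OF \<psi>C1])
  have cgu: "continuous_on UNIV (grad u)" by (rule C1_grad_cont[OF uC1])
  have cg\<psi>: "continuous_on UNIV (grad \<psi>)" by (rule C1_grad_cont[OF \<psi>C1])
  have c\<phi>1: "continuous_on UNIV \<phi>1" using \<phi>1c unfolding C1c_def by (simp add: C1_cont)
  have c\<phi>2: "continuous_on UNIV \<phi>2" using \<phi>2c unfolding C1c_def by (simp add: C1_cont)
  have cg\<phi>1: "continuous_on UNIV (grad \<phi>1)" using \<phi>1c unfolding C1c_def by (simp add: C1_grad_cont)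
  have cg\<phi>2: "continuous_on UNIV (grad \<phi>2)" using \<phi>2c unfolding C1c_def by (simp add: C1_grad_cont)
  have cN: "continuous_on UNIV (\<lambda>x. npow (norm (grad u x)) (p - 2))"
  proof (cases "p = 2")
    case True then show ?thesis by (simp add: npow_def)
  next
    case False
    then have "(\<lambda>x. npow (norm (grad u x)) (p - 2)) = (\<lambda>x. norm (grad u x) powr (p - 2))"
      by (simp add: npow_def)
    moreover have "continuous_on UNIV (\<lambda>x. norm (grad u x) powr (p - 2))"
      using False p by (intro continuous_on_powr' continuous_intros cgu) auto
    ultimately show ?thesis by metis
  qed
  have unz: "\<forall>x\<in>UNIV. u x \<noteq> 0" using upos by (simp add: less_imp_neq[symmetric])
  have it1: "integrable lebesgue (\<lambda>x. w x * npow (norm (grad u x)) (p - 2) * (norm (grad \<phi>1 x))\<^sup>2)"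
  proof -
    have "integrable lebesgue (\<lambda>x. w x * (npow (norm (grad u x)) (p - 2) * (norm (grad \<phi>1 x))\<^sup>2))"
      by (rule int_compact_cont[OF Lw cK]) (use z1 out in \<open>auto intro!: continuous_intros cN cg\<phi>1\<close>)
    then show ?thesis by (simp add: mult.assoc)
  qed
  have iwi: "integrable lebesgue (\<lambda>x. w x * npow (norm (grad u x)) (p - 2) * (grad u x \<bullet> grad \<phi>2 x))"
  proof -
    have "integrable lebesgue (\<lambda>x. w x * (npow (norm (grad u x)) (p - 2) * (grad u x \<bullet> grad \<phi>2 x)))"
      by (rule int_compact_cont[OF Lw cK]) (use z2 out in \<open>auto intro!: continuous_intros cN cg\<phi>2 cgu\<close>)
    then show ?thesis by (simp add: mult.assoc)
  qed
  have it3: "integrable lebesgue (\<lambda>x. g x * fnl' \<delta> \<delta> (u x) * (\<phi>1 x)\<^sup>2)"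
  proof -
    have "integrable lebesgue (\<lambda>x. g x * (fnl' \<delta> \<delta> (u x) * (\<phi>1 x)\<^sup>2))"
      by (rule int_compact_cont[OF Lg cK]) (use z1 out unz in \<open>auto simp: fnl'_def intro!: continuous_intros cu c\<phi>1\<close>)
    then show ?thesis by (simp add: mult.assoc)
  qed
  have iri: "integrable lebesgue (\<lambda>x. g x * fnl \<delta> \<delta> (u x) * \<phi>2 x)"
  proof -
    have "integrable lebesgue (\<lambda>x. g x * (fnl \<delta> \<delta> (u x) * \<phi>2 x))"
      by (rule int_compact_cont[OF Lg cK]) (use z2 out unz in \<open>auto simp: fnl_def intro!: continuous_intros cu c\<phi>2\<close>)
    then show ?thesis by (simp add: mult.assoc)
  qed
  have ij: "integrable lebesgue (\<lambda>x. g x * (\<psi> x / u x) powr q)"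
  proof (rule int_compact_cont[OF Lg cK])
    show "continuous_on UNIV (\<lambda>x. (\<psi> x / u x) powr q)"
      using upos \<psi>0 q1 by (intro continuous_on_powr' continuous_intros cu c\<psi>) (auto simp: less_imp_neq[symmetric] less_imp_le)
  qed (use out in simp)
  have Wk: "(\<integral>x. w x * npow (norm (grad u x)) (p - 2) * (grad u x \<bullet> grad \<phi>2 x) \<partial>lebesgue)
        = (\<integral>x. g x * fnl \<delta> \<delta> (u x) * \<phi>2 x \<partial>lebesgue)"
    using weak \<phi>2c unfolding weak_solution_def by blast
  have St: "(\<integral>x. w x * npow (norm (grad u x)) (p - 2) * (norm (grad \<phi>1 x))\<^sup>2 \<partial>lebesgue)
        + (p - 2) * (\<integral>x. (if grad u x = 0 then 0
               else w x * norm (grad u x) powr (p - 4) * (grad u x \<bullet> grad \<phi>1 x)\<^sup>2) \<partial>lebesgue)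
        - (\<integral>x. g x * fnl' \<delta> \<delta> (u x) * (\<phi>1 x)\<^sup>2 \<partial>lebesgue) \<ge> 0"
    using stab \<phi>1c unfolding stable_def by blast
  have T2: "(\<integral>x. (if grad u x = 0 then 0
               else w x * norm (grad u x) powr (p - 4) * (grad u x \<bullet> grad \<phi>1 x)\<^sup>2) \<partial>lebesgue)
        \<le> (\<integral>x. w x * npow (norm (grad u x)) (p - 2) * (norm (grad \<phi>1 x))\<^sup>2 \<partial>lebesgue)"
  proof (rule integral_mono_AE'[OF it1])
    show "AE x in lebesgue. (if grad u x = 0 then 0
               else w x * norm (grad u x) powr (p - 4) * (grad u x \<bullet> grad \<phi>1 x)\<^sup>2)
          \<le> w x * npow (norm (grad u x)) (p - 2) * (norm (grad \<phi>1 x))\<^sup>2"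
      using wpos by eventually_elim (rule T2_le, simp)
    show "AE x in lebesgue. 0 \<le> w x * npow (norm (grad u x)) (p - 2) * (norm (grad \<phi>1 x))\<^sup>2"
      using wpos by eventually_elim (simp add: npow_nonneg)
  qed
  define t1 where "t1 = (\<integral>x. w x * npow (norm (grad u x)) (p - 2) * (norm (grad \<phi>1 x))\<^sup>2 \<partial>lebesgue)"
  define t2 where "t2 = (\<integral>x. (if grad u x = 0 then 0
               else w x * norm (grad u x) powr (p - 4) * (grad u x \<bullet> grad \<phi>1 x)\<^sup>2) \<partial>lebesgue)"
  define t3 where "t3 = (\<integral>x. g x * fnl' \<delta> \<delta> (u x) * (\<phi>1 x)\<^sup>2 \<partial>lebesgue)"
  define tw where "tw = (\<integral>x. w x * npow (norm (grad u x)) (p - 2) * (grad u x \<bullet> grad \<phi>2 x) \<partial>lebesgue)"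
  define tr where "tr = (\<integral>x. g x * fnl \<delta> \<delta> (u x) * \<phi>2 x \<partial>lebesgue)"
  define J where "J = (\<integral>x. g x * (\<psi> x / u x) powr q \<partial>lebesgue)"
  have "(p - 2) * t2 \<le> (p - 2) * t1" using T2 p unfolding t1_def t2_def by (intro mult_left_mono) auto
  then have A: "(p - 1) * t1 - t3 \<ge> 0" using St unfolding t1_def[symmetric] t2_def[symmetric] t3_def[symmetric]
    by (simp add: algebra_simps)
  have Wk': "tw = tr" using Wk unfolding tw_def tr_def .
  define F where "F = (\<lambda>x. (p - 1) * (w x * npow (norm (grad u x)) (p - 2) * (norm (grad \<phi>1 x))\<^sup>2)
     - g x * fnl' \<delta> \<delta> (u x) * (\<phi>1 x)\<^sup>2
     + \<mu> * (w x * npow (norm (grad u x)) (p - 2) * (grad u x \<bullet> grad \<phi>2 x) - g x * fnl \<delta> \<delta> (u x) * \<phi>2 x)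
     + \<epsilon> * (g x * (\<psi> x / u x) powr q))"
  have iF: "integrable lebesgue F" unfolding F_def using it1 it3 iwi iri ij by auto
  have intF: "integral\<^sup>L lebesgue F = (p - 1) * t1 - t3 + \<mu> * (tw - tr) + \<epsilon> * J"
    unfolding F_def t1_def t3_def tw_def tr_def J_def using it1 it3 iwi iri ij by simp
  have FJ: "\<epsilon> * J \<le> integral\<^sup>L lebesgue F" using intF A Wk' by simp
  define r where "r = (\<lambda>x. w x powr \<theta> * norm (grad \<psi> x) powr (p * \<theta>))"
  have Fle: "AE x in lebesgue. F x \<le> C * r x"
    using wpos gpos gM
  proof eventually_elim
    case (elim x)
    show ?case
    proof (cases "\<psi> x = 0")
      case True
      have "F x = 0" unfolding F_def using z1[OF True] z2[OF True] True by simp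
      moreover have "r x \<ge> 0" unfolding r_def by simp
      ultimately show ?thesis using C by simp
    next
      case False
      then have s0: "\<psi> x > 0" using \<psi>0 by (metis order_le_less)
      have inv: "1 / g x \<le> M0" using elim by simp
      have cs: "\<bar>grad u x \<bullet> grad \<psi> x\<bar> \<le> norm (grad u x) * norm (grad \<psi> x)"
        by (rule Cauchy_Schwarz_ineq2)
      have "F x = (p - 1) * (w x * npow (norm (grad u x)) (p - 2) * ((-\<alpha> * u x powr (-\<alpha>-1) * \<psi> x powr (q/2))\<^sup>2 * (norm (grad u x))\<^sup>2
        + 2 * (-\<alpha> * u x powr (-\<alpha>-1) * \<psi> x powr (q/2)) * (u x powr (-\<alpha>) * ((q/2) * \<psi> x powr (q/2-1))) * (grad u x \<bullet> grad \<psi> x)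
        + (u x powr (-\<alpha>) * ((q/2) * \<psi> x powr (q/2-1)))\<^sup>2 * (norm (grad \<psi> x))\<^sup>2))
     - g x * fnl' \<delta> \<delta> (u x) * (u x powr (-\<alpha>) * \<psi> x powr (q/2))\<^sup>2
     + \<mu> * (w x * npow (norm (grad u x)) (p - 2) * ((-(2 * \<alpha>+1) * u x powr (-(2 * \<alpha>+1)-1) * \<psi> x powr q) * (norm (grad u x))\<^sup>2
           + (u x powr (-(2 * \<alpha>+1)) * (q * \<psi> x powr (q-1))) * (grad u x \<bullet> grad \<psi> x))
         - g x * fnl \<delta> \<delta> (u x) * (u x powr (-(2 * \<alpha>+1)) * \<psi> x powr q))
     + \<epsilon> * (g x * (\<psi> x / u x) powr q)"
        unfolding F_def g1 g2 norm_comb inner_comb by (simp only: \<phi>1_def \<phi>2_def)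
      also have "\<dots> \<le> C * r x" unfolding r_def
        by (rule SM[rule_format]) (use elim inv upos s0 \<psi>01 cs in auto)
      finally show ?thesis .
    qed
  qed
  have rmeas: "(\<lambda>x. ennreal (r x)) \<in> borel_measurable lebesgue"
    unfolding r_def using L1loc_meas[OF Lw] cont_borel_lebesgue[OF cg\<psi>] by measurable
  have J0: "J \<ge> 0"
    unfolding J_def using gpos by (intro integral_nonneg_AE) (auto elim: AE_mp)
  have LJ: "(\<integral>\<^sup>+ x. ennreal (g x * (\<psi> x / u x) powr q) \<partial>lebesgue) = ennreal J"
    unfolding J_def using gpos by (intro nn_integral_eq_integral ij) (auto elim: AE_mp)
  have "ennreal (\<epsilon> * J) \<le> ennreal (integral\<^sup>L lebesgue F)" using FJ by (rule ennreal_leI)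
  also have "\<dots> \<le> (\<integral>\<^sup>+x. ennreal (F x) \<partial>lebesgue)" by (rule ennreal_integral_le_nn[OF iF])
  also have "\<dots> \<le> (\<integral>\<^sup>+x. ennreal C * ennreal (r x) \<partial>lebesgue)"
  proof (rule nn_integral_mono_AE)
    show "AE x in lebesgue. ennreal (F x) \<le> ennreal C * ennreal (r x)"
      using Fle proof eventually_elim
      case (elim x)
      have "r x \<ge> 0" unfolding r_def by simp
      then have "ennreal C * ennreal (r x) = ennreal (C * r x)" using C by (simp add: ennreal_mult)
      then show ?case using elim by (simp add: ennreal_leI)
    qed
  qed
  also have "\<dots> = ennreal C * (\<integral>\<^sup>+x. ennreal (r x) \<partial>lebesgue)" by (rule nn_integral_cmult[OF rmeas])
  finally have main: "ennreal \<epsilon> * ennreal J \<le> ennreal C * (\<integral>\<^sup>+x. ennreal (r x) \<partial>lebesgue)"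
    using \<epsilon> J0 by (simp add: ennreal_mult)
  define R where "R = (\<integral>\<^sup>+x. ennreal (r x) \<partial>lebesgue)"
  have "ennreal J = ennreal (1 / \<epsilon>) * (ennreal \<epsilon> * ennreal J)"
    using \<epsilon> by (simp add: ennreal_mult[symmetric] mult.assoc[symmetric])
  also have "\<dots> \<le> ennreal (1 / \<epsilon>) * (ennreal C * R)" using main unfolding R_def by (intro mult_left_mono) auto
  also have "\<dots> = ennreal (C / \<epsilon>) * R" using \<epsilon> C by (simp add: ennreal_mult[symmetric] mult.assoc[symmetric])
  also have "\<dots> \<le> ennreal (C / \<epsilon> + 1) * R" by (intro mult_right_mono ennreal_leI) auto
  finally show ?thesis unfolding LJ R_def r_def .
qed

lemma final_beta:
  fixes p \<delta> \<gamma> m \<beta> :: real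
  assumes p: "p \<ge> 2" and g: "\<delta> = \<gamma>" and d: "\<delta> \<ge> 1" and b: "0 < \<beta>" "\<beta> < s_p p \<delta>"
  shows "\<exists>c>0. \<forall>(w::'a::euclidean_space \<Rightarrow> real) g u.
       L1loc w \<and> L1loc g \<and> (AE x in lebesgue. w x > 0) \<and> (AE x in lebesgue. g x > 0)
       \<and> Linf (\<lambda>x. 1 / g x) \<and> Linf_norm (\<lambda>x. 1 / g x) = m
       \<and> C1 u \<and> (\<forall>x. u x > 0) \<and> weak_solution p \<delta> \<gamma> w g u \<and> stable p \<delta> \<gamma> w g u
       \<longrightarrow> (\<forall>\<psi>. C1c \<psi> \<and> (\<forall>x. 0 \<le> \<psi> x \<and> \<psi> x \<le> 1) \<longrightarrow>
             (\<integral>\<^sup>+ x. ennreal (g x * (\<psi> x / u x) powr (2 * \<beta> + p - 1 + \<delta>)) \<partial>lebesgue)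
             \<le> ennreal c * (\<integral>\<^sup>+ x. ennreal (w x powr ((2 * \<beta> + p - 1 + \<delta>) / (p - 1 + \<delta>))
                  * norm (grad \<psi> x) powr (p * ((2 * \<beta> + p - 1 + \<delta>) / (p - 1 + \<delta>)))) \<partial>lebesgue))"
  unfolding g[symmetric]
  using scalar_main[OF p d b(1) D_pos[OF p d b] add_nonneg_nonneg[OF abs_ge_zero zero_le_one, of m]]
  apply (elim exE conjE)
  subgoal for \<epsilon> C
    apply (rule exI[of _ "C / \<epsilon> + 1"])
    apply (intro conjI allI impI)
     apply (simp add: add_nonneg_pos)
    apply (elim conjE)
    apply (frule (1) Linf_AE)
    apply (rule main_bound[where \<alpha>="\<beta> + (p-2)/2" and q="2 * \<beta> + p - 1 + \<delta>"
          and \<theta>="(2 * \<beta> + p - 1 + \<delta>) / (p - 1 + \<delta>)"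
          and \<mu>="((p - 1) * (\<beta> + (p-2)/2)\<^sup>2 / (2 * (\<beta> + (p-2)/2) + 1) + \<delta>) / 2", OF p d b(1)])
    apply (assumption | rule refl)+
    done
  done

theorem theorem3p1:
  fixes p \<delta> \<gamma> m :: real
  assumes "p \<ge> 2" and "\<delta> = \<gamma>" and "\<delta> \<ge> 1" and "class_Pa \<delta> p"
  shows "\<forall>\<beta>. 0 < \<beta> \<and> \<beta> < s_p p \<delta> \<longrightarrow>
    (\<exists>c>0. \<forall>(w::'a::euclidean_space \<Rightarrow> real) g u.
       L1loc w \<and> L1loc g \<and> (AE x in lebesgue. w x > 0) \<and> (AE x in lebesgue. g x > 0)
       \<and> Linf (\<lambda>x. 1 / g x) \<and> Linf_norm (\<lambda>x. 1 / g x) = m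
       \<and> C1 u \<and> (\<forall>x. u x > 0) \<and> weak_solution p \<delta> \<gamma> w g u \<and> stable p \<delta> \<gamma> w g u
       \<longrightarrow> (\<forall>\<psi>. C1c \<psi> \<and> (\<forall>x. 0 \<le> \<psi> x \<and> \<psi> x \<le> 1) \<longrightarrow>
             (\<integral>\<^sup>+ x. ennreal (g x * (\<psi> x / u x) powr (2 * \<beta> + p - 1 + \<delta>)) \<partial>lebesgue)
             \<le> ennreal c * (\<integral>\<^sup>+ x. ennreal (w x powr ((2 * \<beta> + p - 1 + \<delta>) / (p - 1 + \<delta>))
                  * norm (grad \<psi> x) powr (p * ((2 * \<beta> + p - 1 + \<delta>) / (p - 1 + \<delta>)))) \<partial>lebesgue)))"
  using final_beta[OF assms(1,2,3)] by blast


end
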